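(* Every block graph is hereditarily connected-domishold. Every trivially perfect graph is hereditarily connected-domishold.
   Context: A block graph is a graph in which every block (maximal connected subgraph without a cut vertex) is a complete graph. A trivially perfect graph is a graph with no induced subgraph isomorphic to $P_4$ or $C_4$. A connected dominating set of a connected graph $G$ is a set $S\subseteq V(G)$ such that every vertex outside $S$ has a neighbor in $S$ and $G[S]$ is connected; $G$ is connected-domishold if there exist $w:V(G)\to\mathbb{R}_{\ge0}$, $t\in\mathbb{R}_{\ge0}$ with $\sum_{x\in S}w(x)\ge t$ iff $S$ is a connected dominating set, for all $S\subseteq V(G)$; disconnected graphs are connected-domishold by convention. $G$ is hereditarily connected-domishold if all its induced subgraphs are connected-domishold. *)

theory Defs
  imports Complex_Main
begin

text \<open>A finite simple graph is given by a finite vertex set V and a symmetric,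
  irreflexive adjacency relation E on the ambient type; only edges between
  vertices of V matter. The induced subgraph G[S] for S \<subseteq> V is (S, E).\<close>

definition simple_graph :: "'a set \<Rightarrow> ('a \<Rightarrow> 'a \<Rightarrow> bool) \<Rightarrow> bool" where
  "simple_graph V E \<longleftrightarrow> finite V \<and> (\<forall>x y. E x y \<longrightarrow> E y x) \<and> (\<forall>x. \<not> E x x)"

definition connected_on :: "('a \<Rightarrow> 'a \<Rightarrow> bool) \<Rightarrow> 'a set \<Rightarrow> bool" where
  "connected_on E S \<longleftrightarrow> S \<noteq> {} \<and>
     (\<forall>x\<in>S. \<forall>y\<in>S. (\<lambda>u v. E u v \<and> u \<in> S \<and> v \<in> S)\<^sup>*\<^sup>* x y)"

definition is_clique :: "('a \<Rightarrow> 'a \<Rightarrow> bool) \<Rightarrow> 'a set \<Rightarrow> bool" where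
  "is_clique E S \<longleftrightarrow> (\<forall>x\<in>S. \<forall>y\<in>S. x \<noteq> y \<longrightarrow> E x y)"

definition no_cut_vertex :: "('a \<Rightarrow> 'a \<Rightarrow> bool) \<Rightarrow> 'a set \<Rightarrow> bool" where
  "no_cut_vertex E B \<longleftrightarrow> (\<forall>v\<in>B. B - {v} \<noteq> {} \<longrightarrow> connected_on E (B - {v}))"

definition is_block :: "'a set \<Rightarrow> ('a \<Rightarrow> 'a \<Rightarrow> bool) \<Rightarrow> 'a set \<Rightarrow> bool" where
  "is_block V E B \<longleftrightarrow> B \<subseteq> V \<and> connected_on E B \<and> no_cut_vertex E B \<and>
     (\<forall>B'. B \<subset> B' \<and> B' \<subseteq> V \<longrightarrow> \<not> (connected_on E B' \<and> no_cut_vertex E B'))"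

definition block_graph :: "'a set \<Rightarrow> ('a \<Rightarrow> 'a \<Rightarrow> bool) \<Rightarrow> bool" where
  "block_graph V E \<longleftrightarrow> (\<forall>B. is_block V E B \<longrightarrow> is_clique E B)"

text \<open>No induced P4 and no induced C4.\<close>
definition trivially_perfect :: "'a set \<Rightarrow> ('a \<Rightarrow> 'a \<Rightarrow> bool) \<Rightarrow> bool" where
  "trivially_perfect V E \<longleftrightarrow>
     \<not> (\<exists>a\<in>V. \<exists>b\<in>V. \<exists>c\<in>V. \<exists>d\<in>V. distinct [a,b,c,d] \<and>
          E a b \<and> E b c \<and> E c d \<and> \<not> E a c \<and> \<not> E b d \<and> \<not> E a d) \<and>
     \<not> (\<exists>a\<in>V. \<exists>b\<in>V. \<exists>c\<in>V. \<exists>d\<in>V. distinct [a,b,c,d] \<and>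
          E a b \<and> E b c \<and> E c d \<and> E d a \<and> \<not> E a c \<and> \<not> E b d)"

definition connected_dominating_set :: "'a set \<Rightarrow> ('a \<Rightarrow> 'a \<Rightarrow> bool) \<Rightarrow> 'a set \<Rightarrow> bool" where
  "connected_dominating_set V E S \<longleftrightarrow> S \<subseteq> V \<and>
     (\<forall>x\<in>V - S. \<exists>y\<in>S. E x y) \<and> connected_on E S"

definition connected_domishold :: "'a set \<Rightarrow> ('a \<Rightarrow> 'a \<Rightarrow> bool) \<Rightarrow> bool" where
  "connected_domishold V E \<longleftrightarrow> \<not> connected_on E V \<or>
     (\<exists>(w :: 'a \<Rightarrow> real) (t :: real). (\<forall>x\<in>V. w x \<ge> 0) \<and> t \<ge> 0 \<and>
        (\<forall>S. S \<subseteq> V \<longrightarrow> ((\<Sum>x\<in>S. w x) \<ge> t \<longleftrightarrow> connected_dominating_set V E S)))"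

definition hereditarily_connected_domishold :: "'a set \<Rightarrow> ('a \<Rightarrow> 'a \<Rightarrow> bool) \<Rightarrow> bool" where
  "hereditarily_connected_domishold V E \<longleftrightarrow> (\<forall>S. S \<subseteq> V \<longrightarrow> connected_domishold S E)"

end

theory Submission
  imports Defs
begin

definition R :: "('a \<Rightarrow> 'a \<Rightarrow> bool) \<Rightarrow> 'a set \<Rightarrow> 'a \<Rightarrow> 'a \<Rightarrow> bool" where
  "R E A = (\<lambda>u v. E u v \<and> u \<in> A \<and> v \<in> A)"

lemma conn_R: "connected_on E S \<longleftrightarrow> S \<noteq> {} \<and> (\<forall>x\<in>S. \<forall>y\<in>S. (R E S)\<^sup>*\<^sup>* x y)"
  unfolding connected_on_def R_def by simp

lemma R_sym:
  assumes "\<forall>x y. E x y \<longrightarrow> E y x" "(R E A)\<^sup>*\<^sup>* x y"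
  shows "(R E A)\<^sup>*\<^sup>* y x"
proof -
  have "symp (R E A)" using assms(1) unfolding R_def symp_def by blast
  then show ?thesis using assms(2) by (metis sympD symp_rtranclp)
qed

lemma R_mono:
  assumes "A \<subseteq> B" "(R E A)\<^sup>*\<^sup>* x y"
  shows "(R E B)\<^sup>*\<^sup>* x y"
  using assms(2) by (rule rtranclp_mono[THEN predicate2D, rotated]) (use assms(1) in \<open>auto simp: R_def\<close>)

lemma conn_center:
  assumes "\<forall>x y. E x y \<longrightarrow> E y x" "c \<in> B" "\<forall>y\<in>B. (R E B)\<^sup>*\<^sup>* c y"
  shows "connected_on E B"
  unfolding conn_R using assms
  by (metis R_sym empty_iff rtranclp_trans)

fun walk :: "('a \<Rightarrow> 'a \<Rightarrow> bool) \<Rightarrow> 'a set \<Rightarrow> 'a list \<Rightarrow> bool" where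
  "walk E A [] = False"
| "walk E A [x] = (x \<in> A)"
| "walk E A (x # y # xs) = (x \<in> A \<and> E x y \<and> walk E A (y # xs))"

lemma walk_set: "walk E A xs \<Longrightarrow> set xs \<subseteq> A"
  by (induction E A xs rule: walk.induct) auto

lemma walk_mono: "walk E A xs \<Longrightarrow> set xs \<subseteq> B \<Longrightarrow> walk E B xs"
  by (induction E A xs rule: walk.induct) auto

lemma walk_append:
  "xs \<noteq> [] \<Longrightarrow> ys \<noteq> [] \<Longrightarrow> walk E A (xs @ ys) \<longleftrightarrow> walk E A xs \<and> walk E A ys \<and> E (last xs) (hd ys)"
proof (induction xs)
  case Nil then show ?case by simp
next
  case (Cons x xs)
  show ?case
  proof (cases xs)
    case Nil
    then show ?thesis using Cons by (cases ys) auto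
  next
    case (Cons y zs)
    then show ?thesis using Cons.IH Cons.prems by auto
  qed
qed

lemma rtrancl_walk:
  assumes "(R E A)\<^sup>*\<^sup>* x y" "y \<in> A"
  shows "\<exists>xs. walk E A xs \<and> hd xs = x \<and> last xs = y"
  using assms(1)
proof (induction rule: converse_rtranclp_induct)
  case base
  then show ?case using assms(2) by (intro exI[of _ "[y]"]) auto
next
  case (step x z)
  then obtain zs where zs: "walk E A zs" "hd zs = z" "last zs = y" by blast
  then have "zs \<noteq> []" by auto
  then have "walk E A (x # zs)" using zs step(1) unfolding R_def
    by (cases zs) auto
  then show ?case using zs \<open>zs \<noteq> []\<close> by (intro exI[of _ "x # zs"]) auto
qed

lemma walk_rtrancl:
  "walk E A xs \<Longrightarrow> y \<in> set xs \<Longrightarrow> (R E (set xs))\<^sup>*\<^sup>* (hd xs) y"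
proof (induction E A xs rule: walk.induct)
  case (3 E A x z xs)
  show ?case
  proof (cases "y = x")
    case True then show ?thesis by simp
  next
    case False
    then have "y \<in> set (z # xs)" using 3 by simp
    then have "(R E (set (z # xs)))\<^sup>*\<^sup>* z y" using 3 by auto
    then have "(R E (set (x # z # xs)))\<^sup>*\<^sup>* z y" by (rule R_mono[rotated]) auto
    moreover have "R E (set (x # z # xs)) x z" using 3 by (simp add: R_def)
    ultimately show ?thesis by (simp add: converse_rtranclp_into_rtranclp)
  qed
qed auto

lemma walk_take: assumes "walk E A xs" "0 < k" shows "walk E A (take k xs)"
proof (cases "k < length xs")
  case True
  have "xs \<noteq> []" using assms by auto
  then have "take k xs \<noteq> []" "drop k xs \<noteq> []" using True assms(2) by auto
  then show ?thesis using assms(1) walk_append[of "take k xs" "drop k xs" E A] by simp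
next
  case False then show ?thesis using assms by simp
qed

lemma walk_drop: assumes "walk E A xs" "k < length xs" shows "walk E A (drop k xs)"
proof (cases "k = 0")
  case False
  then have "take k xs \<noteq> []" "drop k xs \<noteq> []" using assms(2) by auto
  then show ?thesis using assms(1) walk_append[of "take k xs" "drop k xs" E A] by simp
qed (use assms in simp)

lemma walk_nth: "walk E A xs \<Longrightarrow> Suc i < length xs \<Longrightarrow> E (xs!i) (xs!Suc i)"
proof (induction E A xs arbitrary: i rule: walk.induct)
  case (3 E A x y xs)
  then show ?case by (cases i) auto
qed auto

lemma last_take_Suc: "i < length xs \<Longrightarrow> last (take (Suc i) xs) = xs!i"
proof -
  assume h: "i < length xs"
  then have "take (Suc i) xs \<noteq> []" by (cases xs) auto
  moreover have "length (take (Suc i) xs) = Suc i" using h by simp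
  ultimately show ?thesis using h by (simp add: last_conv_nth)
qed

lemma walk_ne: "walk E A xs \<Longrightarrow> xs \<noteq> []" by auto

lemma short_walk:
  assumes irr: "\<forall>x. \<not> E x x" and "(R E A)\<^sup>*\<^sup>* x y" "y \<in> A"
  shows "\<exists>xs. walk E A xs \<and> hd xs = x \<and> last xs = y \<and> distinct xs \<and>
    (\<forall>i j. Suc i < j \<and> j < length xs \<longrightarrow> \<not> E (xs!i) (xs!j))"
proof -
  let ?P = "\<lambda>xs. walk E A xs \<and> hd xs = x \<and> last xs = y"
  obtain xs0 where "?P xs0" using rtrancl_walk[OF assms(2,3)] by blast
  then obtain xs where P: "?P xs" and min: "\<And>ys. ?P ys \<Longrightarrow> length xs \<le> length ys"
    using ex_has_least_nat[of ?P xs0 length] by blast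
  have ne: "xs \<noteq> []" using P by auto
  have chord: "\<not> E (xs!i) (xs!j)" if ij: "Suc i < j" "j < length xs" for i j
  proof
    assume e: "E (xs!i) (xs!j)"
    let ?ys = "take (Suc i) xs @ drop j xs"
    have t: "take (Suc i) xs \<noteq> []" "drop j xs \<noteq> []" using ij ne by auto
    have lt: "last (take (Suc i) xs) = xs!i" using ij by (simp add: last_take_Suc)
    have hd: "hd (drop j xs) = xs!j" using ij by (simp add: hd_drop_conv_nth)
    have "walk E A ?ys" using walk_append[OF t] walk_take[OF conjunct1[OF P]] walk_drop[OF conjunct1[OF P]] lt hd e ij
      by simp
    moreover have "hd ?ys = x" using P ne by simp
    moreover have "last ?ys = y" using P t ij by (simp add: last_drop)
    ultimately have "length xs \<le> length ?ys" using min by blast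
    then show False using ij by simp
  qed
  have dist: "distinct xs"
    unfolding distinct_conv_nth
  proof (intro allI impI)
    fix i j assume h: "i < length xs" "j < length xs" "i \<noteq> j"
    show "xs!i \<noteq> xs!j"
    proof
      assume eq: "xs!i = xs!j"
      have "\<exists>i j. i < j \<and> j < length xs \<and> xs!i = xs!j"
        using h eq by (metis linorder_neqE_nat)
      then obtain i j where ij: "i < j" "j < length xs" "xs!i = xs!j" by blast
      let ?ys = "take (Suc i) xs @ drop (Suc j) xs"
      have w: "walk E A xs" using P by simp
      have t: "take (Suc i) xs \<noteq> []" using ij ne by auto
      have lt: "last (take (Suc i) xs) = xs!i" using ij by (simp add: last_take_Suc)
      have "?P ?ys"
      proof (cases "Suc j = length xs")
        case True
        then have "?ys = take (Suc i) xs" by simp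
        moreover have "length xs - 1 = j" using True by simp
        then have "last xs = xs!j" using last_conv_nth[OF ne] by simp
        ultimately show ?thesis using walk_take[OF w, of "Suc i"] lt ij P ne by simp
      next
        case False
        then have t2: "drop (Suc j) xs \<noteq> []" using ij by simp
        have hd: "hd (drop (Suc j) xs) = xs!Suc j" using ij False by (simp add: hd_drop_conv_nth)
        have e: "E (xs!j) (xs!Suc j)" using walk_nth[OF w, of j] ij False by simp
        have "walk E A ?ys" using walk_append[OF t t2] walk_take[OF w] walk_drop[OF w] lt hd e ij False ij(3)
          by simp
        moreover have "hd ?ys = x" using P ne by simp
        moreover have "last ?ys = y" using P t2 by (simp add: last_drop)
        ultimately show ?thesis by blast
      qed
      then have "length xs \<le> length ?ys" using min by blast
      then show False using ij by simp
    qed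
  qed
  show ?thesis using P dist chord by blast
qed

lemma R_step: "E u v \<Longrightarrow> u \<in> A \<Longrightarrow> v \<in> A \<Longrightarrow> (R E A)\<^sup>*\<^sup>* v y \<Longrightarrow> (R E A)\<^sup>*\<^sup>* u y"
  by (simp add: R_def converse_rtranclp_into_rtranclp)

lemma bicon:
  assumes sym: "\<forall>x y. E x y \<longrightarrow> E y x" and w: "walk E A Q" and d: "distinct Q"
    and v: "v \<notin> set Q" "E v (hd Q)" "E v (last Q)"
  shows "connected_on E (insert v (set Q)) \<and> no_cut_vertex E (insert v (set Q))"
proof -
  let ?B = "insert v (set Q)"
  have ne: "Q \<noteq> []" using w by auto
  have hdQ: "hd Q \<in> set Q" using ne by simp
  have reach: "(R E (set Q))\<^sup>*\<^sup>* (hd Q) y" if "y \<in> set Q" for y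
    using walk_rtrancl[OF w that] .
  have conn: "connected_on E ?B"
  proof (rule conn_center[OF sym, of v])
    show "\<forall>y\<in>?B. (R E ?B)\<^sup>*\<^sup>* v y"
    proof
      fix y assume "y \<in> ?B"
      then show "(R E ?B)\<^sup>*\<^sup>* v y"
      proof
        assume "y \<in> set Q"
        then have "(R E ?B)\<^sup>*\<^sup>* (hd Q) y" using reach R_mono[of "set Q" ?B] by blast
        then show ?thesis using R_step[of E v "hd Q" ?B] v hdQ by blast
      qed simp
    qed
  qed simp
  have ncv: "no_cut_vertex E ?B"
    unfolding no_cut_vertex_def
  proof (intro ballI impI)
    fix u assume u: "u \<in> ?B" "?B - {u} \<noteq> {}"
    show "connected_on E (?B - {u})"
    proof (cases "u = v")
      case True
      then have eq: "?B - {u} = set Q" using v by auto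
      show ?thesis unfolding eq using conn_center[OF sym hdQ] reach by blast
    next
      case False
      then have uQ: "u \<in> set Q" using u by simp
      obtain ys zs where Qs: "Q = ys @ u # zs" using split_list[OF uQ] by blast
      have nys: "u \<notin> set ys" "u \<notin> set zs" using d Qs by auto
      have sub: "set ys \<subseteq> ?B - {u}" "set zs \<subseteq> ?B - {u}" using Qs nys by auto
      have vin: "v \<in> ?B - {u}" using False by simp
      show ?thesis
      proof (rule conn_center[OF sym vin], intro ballI)
        fix y assume y: "y \<in> ?B - {u}"
        show "(R E (?B - {u}))\<^sup>*\<^sup>* v y"
        proof (cases "y = v")
          case True then show ?thesis by simp
        next
          case False
          then have "y \<in> set ys \<or> y \<in> set zs" using y Qs by auto
          then show ?thesis
          proof
            assume yy: "y \<in> set ys"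
            then have yne: "ys \<noteq> []" by auto
            have wy: "walk E A ys" using w Qs walk_append[OF yne, of "u # zs" E A] by simp
            have "(R E (set ys))\<^sup>*\<^sup>* (hd ys) y" using walk_rtrancl[OF wy yy] .
            then have r: "(R E (?B - {u}))\<^sup>*\<^sup>* (hd ys) y" using R_mono[OF sub(1)] by blast
            have "hd ys = hd Q" using Qs yne by simp
            moreover have "hd ys \<in> ?B - {u}" using yne sub(1) hd_in_set by blast
            ultimately show ?thesis using R_step[OF _ vin _ r] v by simp
          next
            assume yz: "y \<in> set zs"
            then have zne: "zs \<noteq> []" by auto
            have wz: "walk E A zs" using w Qs walk_append[of "ys @ [u]" zs E A] zne by simp
            have lz: "last zs \<in> set zs" using zne by simp
            have r1: "(R E (?B - {u}))\<^sup>*\<^sup>* (hd zs) y"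
              using walk_rtrancl[OF wz yz] R_mono[OF sub(2)] by blast
            have r2: "(R E (?B - {u}))\<^sup>*\<^sup>* (hd zs) (last zs)"
              using walk_rtrancl[OF wz lz] R_mono[OF sub(2)] by blast
            have r: "(R E (?B - {u}))\<^sup>*\<^sup>* (last zs) y"
              using R_sym[OF sym r2] r1 by (rule rtranclp_trans)
            have "last zs = last Q" using Qs zne by simp
            moreover have "last zs \<in> ?B - {u}" using lz sub(2) by blast
            ultimately show ?thesis using R_step[OF _ vin _ r] v by simp
          qed
        qed
      qed
    qed
  qed
  show ?thesis using conn ncv by simp
qed

definition cutv :: "('a \<Rightarrow> 'a \<Rightarrow> bool) \<Rightarrow> 'a set \<Rightarrow> 'a \<Rightarrow> bool" where
  "cutv E S v \<longleftrightarrow> v \<in> S \<and> S - {v} \<noteq> {} \<and> \<not> connected_on E (S - {v})"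

definition bcc :: "('a \<Rightarrow> 'a \<Rightarrow> bool) \<Rightarrow> 'a set \<Rightarrow> bool" where
  "bcc E S \<longleftrightarrow> (\<forall>B. B \<subseteq> S \<longrightarrow> connected_on E B \<and> no_cut_vertex E B \<longrightarrow> is_clique E B)"

lemma Kpath:
  assumes sym: "\<forall>x y. E x y \<longrightarrow> E y x" and irr: "\<forall>x. \<not> E x x"
    and conn: "connected_on E S" and P: "bcc E S" and xy: "x \<in> S" "y \<in> S"
  shows "\<exists>xs. walk E S xs \<and> hd xs = x \<and> last xs = y \<and>
     (\<forall>i. 0 < i \<and> Suc i < length xs \<longrightarrow> cutv E S (xs!i))"
proof -
  have "(R E S)\<^sup>*\<^sup>* x y" using conn xy unfolding conn_R by blast
  then obtain xs where w: "walk E S xs" and h: "hd xs = x" and l: "last xs = y" and d: "distinct xs"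
    and ch: "\<And>i j. Suc i < j \<Longrightarrow> j < length xs \<Longrightarrow> \<not> E (xs!i) (xs!j)"
    using short_walk[of E S x y, OF irr \<open>(R E S)\<^sup>*\<^sup>* x y\<close> xy(2)] by blast
  have "cutv E S (xs!i)" if i: "0 < i" "Suc i < length xs" for i
  proof (rule ccontr)
    assume nc: "\<not> cutv E S (xs!i)"
    define v where "v = xs!i"
    define a where "a = xs!(i - 1)"
    define b where "b = xs!Suc i"
    have setS: "set xs \<subseteq> S" using walk_set[OF w] .
    have vS: "v \<in> S" unfolding v_def using i setS by auto
    have aS: "a \<in> S" "b \<in> S" unfolding a_def b_def using i setS by auto
    have av: "a \<noteq> v" "b \<noteq> v" "a \<noteq> b" unfolding a_def b_def v_def using d i
      by (auto simp: nth_eq_iff_index_eq)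
    have eav: "E a v" unfolding a_def v_def using walk_nth[OF w, of "i - 1"] i by simp
    have evb: "E v b" unfolding b_def v_def using walk_nth[OF w, of i] i by simp
    have "connected_on E (S - {v})" using nc vS aS av unfolding cutv_def v_def by auto
    then have "(R E (S - {v}))\<^sup>*\<^sup>* a b" using aS av unfolding conn_R by blast
    then obtain Q where wQ: "walk E (S - {v}) Q" and hQ: "hd Q = a" and lQ: "last Q = b" and dQ: "distinct Q"
      using short_walk[of E "S - {v}" a b, OF irr] aS av by blast
    have vQ: "v \<notin> set Q" using walk_set[OF wQ] by auto
    have bc: "connected_on E (insert v (set Q)) \<and> no_cut_vertex E (insert v (set Q))"
      using bicon[OF sym wQ dQ vQ] hQ lQ eav evb sym by blast
    have "insert v (set Q) \<subseteq> S" using walk_set[OF wQ] vS by auto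
    then have "is_clique E (insert v (set Q))" using P bc unfolding bcc_def by blast
    moreover have "a \<in> set Q" "b \<in> set Q" using hQ lQ wQ by (auto dest: walk_ne)
    ultimately have "E a b" using av unfolding is_clique_def by blast
    moreover have "\<not> E a b" unfolding a_def b_def using ch[of "i - 1" "Suc i"] i by simp
    ultimately show False by simp
  qed
  then show ?thesis using w h l by blast
qed

lemma cds_cut:
  assumes sym: "\<forall>x y. E x y \<longrightarrow> E y x" and cds: "connected_dominating_set S E T"
    and cv: "cutv E S v"
  shows "v \<in> T"
proof (rule ccontr)
  assume vT: "v \<notin> T"
  have TS: "T \<subseteq> S - {v}" using cds vT unfolding connected_dominating_set_def by auto
  have cT: "connected_on E T" and dom: "\<forall>x\<in>S - T. \<exists>y\<in>T. E x y"
    using cds unfolding connected_dominating_set_def by auto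
  obtain t0 where t0: "t0 \<in> T" using cT unfolding conn_R by blast
  have cTr: "\<And>a b. a \<in> T \<Longrightarrow> b \<in> T \<Longrightarrow> (R E (S - {v}))\<^sup>*\<^sup>* a b"
  proof -
    fix a b assume "a \<in> T" "b \<in> T"
    then have "(R E T)\<^sup>*\<^sup>* a b" using cT unfolding conn_R by blast
    then show "(R E (S - {v}))\<^sup>*\<^sup>* a b" by (rule R_mono[OF TS])
  qed
  have to: "(R E (S - {v}))\<^sup>*\<^sup>* x t0" if x: "x \<in> S - {v}" for x
  proof (cases "x \<in> T")
    case True
    then show ?thesis using cTr t0 by blast
  next
    case False
    then obtain y where y: "y \<in> T" "E x y" using dom x by blast
    have r: "(R E (S - {v}))\<^sup>*\<^sup>* y t0" using cTr t0 y(1) by blast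
    have "y \<in> S - {v}" using y(1) TS by blast
    then show ?thesis using R_step[OF y(2) x _ r] by blast
  qed
  have "connected_on E (S - {v})"
    unfolding conn_R
  proof (intro conjI ballI)
    show "S - {v} \<noteq> {}" using cv unfolding cutv_def by simp
  next
    fix x y assume xy: "x \<in> S - {v}" "y \<in> S - {v}"
    have "(R E (S - {v}))\<^sup>*\<^sup>* t0 y" using R_sym[OF sym to[OF xy(2)]] .
    then show "(R E (S - {v}))\<^sup>*\<^sup>* x y" using to[OF xy(1)] by (rule rtranclp_trans[rotated])
  qed
  then show False using cv unfolding cutv_def by simp
qed

lemma block_cds:
  assumes sym: "\<forall>x y. E x y \<longrightarrow> E y x" and irr: "\<forall>x. \<not> E x x"
    and conn: "connected_on E S" and P: "bcc E S" and TS: "T \<subseteq> S"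
  shows "connected_dominating_set S E T \<longleftrightarrow> T \<noteq> {} \<and> {v. cutv E S v} \<subseteq> T"
proof
  assume "connected_dominating_set S E T"
  then show "T \<noteq> {} \<and> {v. cutv E S v} \<subseteq> T"
    using cds_cut[OF sym] unfolding connected_dominating_set_def conn_R by blast
next
  assume h: "T \<noteq> {} \<and> {v. cutv E S v} \<subseteq> T"
  have path: "\<exists>xs. walk E S xs \<and> hd xs = x \<and> last xs = y \<and>
     (\<forall>i. 0 < i \<and> Suc i < length xs \<longrightarrow> xs!i \<in> T)" if "x \<in> S" "y \<in> S" for x y
    using Kpath[OF sym irr conn P that] h by blast
  have cT: "connected_on E T"
    unfolding conn_R
  proof (intro conjI ballI)
    show "T \<noteq> {}" using h by simp
  next
    fix x y assume xy: "x \<in> T" "y \<in> T"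
    then obtain xs where w: "walk E S xs" and hx: "hd xs = x" and ly: "last xs = y"
      and int: "\<forall>i. 0 < i \<and> Suc i < length xs \<longrightarrow> xs!i \<in> T"
      using path TS by blast
    have ne: "xs \<noteq> []" using w by auto
    have "set xs \<subseteq> T"
    proof
      fix z assume "z \<in> set xs"
      then obtain k where k: "k < length xs" "z = xs!k" by (auto simp: in_set_conv_nth)
      show "z \<in> T"
      proof (cases "k = 0")
        case True then show ?thesis using k hx xy ne by (simp add: hd_conv_nth)
      next
        case False
        show ?thesis
        proof (cases "Suc k < length xs")
          case True then show ?thesis using int False k by auto
        next
          case F2: False
          then have "k = length xs - 1" using k by simp
          then show ?thesis using k ly xy ne by (simp add: last_conv_nth)
        qed
      qed
    qed
    moreover have "last xs \<in> set xs" using ne by simp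
    ultimately show "(R E T)\<^sup>*\<^sup>* x y"
      using walk_rtrancl[OF w] R_mono[of "set xs" T] hx ly by blast
  qed
  have dom: "\<forall>x\<in>S - T. \<exists>y\<in>T. E x y"
  proof
    fix x assume x: "x \<in> S - T"
    obtain t where t: "t \<in> T" using h by blast
    then obtain xs where w: "walk E S xs" and hx: "hd xs = x" and ly: "last xs = t"
      and int: "\<forall>i. 0 < i \<and> Suc i < length xs \<longrightarrow> xs!i \<in> T"
      using path TS x by blast
    have ne: "xs \<noteq> []" using w by auto
    have "length xs \<noteq> 1"
    proof
      assume "length xs = 1"
      then have "hd xs = last xs" by (cases xs) auto
      then show False using hx ly x t by auto
    qed
    then have l2: "Suc 1 \<le> length xs" using ne by (cases xs) (auto simp: Suc_le_eq)
    have e: "E x (xs!1)" using walk_nth[OF w, of 0] l2 hx ne by (simp add: hd_conv_nth)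
    have "xs!1 \<in> T"
    proof (cases "Suc 1 < length xs")
      case True then show ?thesis using int by auto
    next
      case False
      then have "length xs - 1 = 1" using l2 by simp
      then show ?thesis using ly t ne by (simp add: last_conv_nth)
    qed
    then show "\<exists>y\<in>T. E x y" using e by blast
  qed
  show "connected_dominating_set S E T"
    unfolding connected_dominating_set_def using TS cT dom by blast
qed

lemma weights_sub:
  assumes fin: "finite S" and CS: "C \<subseteq> S"
    and Q: "\<forall>T. T \<subseteq> S \<longrightarrow> (Q T \<longleftrightarrow> T \<noteq> {} \<and> C \<subseteq> T)"
  shows "\<exists>(w :: 'a \<Rightarrow> real) (t :: real). (\<forall>x\<in>S. w x \<ge> 0) \<and> t \<ge> 0 \<and>
        (\<forall>T. T \<subseteq> S \<longrightarrow> ((\<Sum>x\<in>T. w x) \<ge> t \<longleftrightarrow> Q T))"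
proof (cases "C = {}")
  case True
  show ?thesis
  proof (intro exI[of _ "\<lambda>_. 1"] exI[of _ 1] conjI allI impI)
    fix T assume T: "T \<subseteq> S"
    then have "finite T" using fin finite_subset by blast
    then have "(\<Sum>x\<in>T. (1::real)) \<ge> 1 \<longleftrightarrow> T \<noteq> {}"
      by (simp add: Suc_le_eq card_gt_0_iff)
    then show "(\<Sum>x\<in>T. (1::real)) \<ge> 1 \<longleftrightarrow> Q T" using Q T True by simp
  qed auto
next
  case False
  show ?thesis
  proof (intro exI[of _ "\<lambda>x. if x \<in> C then 1 else 0"] exI[of _ "real (card C)"] conjI allI impI)
    fix T assume T: "T \<subseteq> S"
    then have fT: "finite T" using fin finite_subset by blast
    have fC: "finite C" using fin CS finite_subset by blast
    have "(\<Sum>x\<in>T. if x \<in> C then 1 else 0 :: real) = real (card (T \<inter> C))"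
      using fT by (simp add: sum.If_cases Int_def)
    moreover have "card (T \<inter> C) \<ge> card C \<longleftrightarrow> C \<subseteq> T"
    proof
      assume "card (T \<inter> C) \<ge> card C"
      then have "T \<inter> C = C" using fC by (meson card_seteq inf_le2)
      then show "C \<subseteq> T" by blast
    next
      assume "C \<subseteq> T" then have "T \<inter> C = C" by blast
      then show "card (T \<inter> C) \<ge> card C" by simp
    qed
    ultimately show "(\<Sum>x\<in>T. if x \<in> C then 1 else 0 :: real) \<ge> real (card C) \<longleftrightarrow> Q T"
      using Q T False by auto
  qed auto
qed

lemma weights_hit:
  assumes fin: "finite S"
    and Q: "\<forall>T. T \<subseteq> S \<longrightarrow> (Q T \<longleftrightarrow> T \<inter> U \<noteq> {})"
  shows "\<exists>(w :: 'a \<Rightarrow> real) (t :: real). (\<forall>x\<in>S. w x \<ge> 0) \<and> t \<ge> 0 \<and>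
        (\<forall>T. T \<subseteq> S \<longrightarrow> ((\<Sum>x\<in>T. w x) \<ge> t \<longleftrightarrow> Q T))"
proof (intro exI[of _ "\<lambda>x. if x \<in> U then 1 else 0"] exI[of _ 1] conjI allI impI)
  fix T assume T: "T \<subseteq> S"
  then have fT: "finite T" using fin finite_subset by blast
  have "(\<Sum>x\<in>T. if x \<in> U then 1 else 0 :: real) = real (card (T \<inter> U))"
    using fT by (simp add: sum.If_cases Int_def)
  moreover have "card (T \<inter> U) \<ge> 1 \<longleftrightarrow> T \<inter> U \<noteq> {}" using fT
    by (simp add: Suc_le_eq card_gt_0_iff)
  ultimately show "(\<Sum>x\<in>T. if x \<in> U then 1 else 0 :: real) \<ge> 1 \<longleftrightarrow> Q T"
    using Q T by simp
qed auto

lemma finite_max: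
  assumes "finite A" "A \<noteq> {}"
  shows "\<exists>x\<in>A. \<forall>y\<in>A. f y \<le> (f x :: nat)"
proof -
  have "Max (f ` A) \<in> f ` A" using assms by simp
  then obtain x where x: "x \<in> A" "f x = Max (f ` A)" by auto
  have "\<forall>y\<in>A. f y \<le> f x" using x assms by simp
  then show ?thesis using x by blast
qed

lemma tp_cds:
  assumes sym: "\<forall>x y. E x y \<longrightarrow> E y x" and irr: "\<forall>x. \<not> E x x" and fin: "finite S"
    and tp: "trivially_perfect S E" and TS: "T \<subseteq> S"
  shows "connected_dominating_set S E T \<longleftrightarrow> T \<inter> {u\<in>S. \<forall>x\<in>S. x \<noteq> u \<longrightarrow> E u x} \<noteq> {}"
    (is "_ \<longleftrightarrow> T \<inter> ?U \<noteq> {}")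
proof
  assume "T \<inter> ?U \<noteq> {}"
  then obtain u where u: "u \<in> T" "u \<in> S" "\<forall>x\<in>S. x \<noteq> u \<longrightarrow> E u x" by blast
  have cT: "connected_on E T"
  proof (rule conn_center[OF sym u(1)], intro ballI)
    fix y assume "y \<in> T"
    then show "(R E T)\<^sup>*\<^sup>* u y" using u TS
      by (cases "y = u") (auto simp: R_def intro!: r_into_rtranclp)
  qed
  have "\<forall>x\<in>S - T. \<exists>y\<in>T. E x y"
  proof
    fix x assume x: "x \<in> S - T"
    then have "x \<noteq> u" using u by auto
    then have "E x u" using u x sym by blast
    then show "\<exists>y\<in>T. E x y" using u by blast
  qed
  then show "connected_dominating_set S E T"
    unfolding connected_dominating_set_def using TS cT by blast
next
  assume cds: "connected_dominating_set S E T"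
  have cT: "connected_on E T" and dom: "\<forall>x\<in>S - T. \<exists>y\<in>T. E x y"
    using cds unfolding connected_dominating_set_def by auto
  show "T \<inter> ?U \<noteq> {}"
  proof
    assume noU: "T \<inter> ?U = {}"
    define N where "N x = {y \<in> S. y = x \<or> E x y}" for x
    have fT: "finite T" using fin TS finite_subset by blast
    have Tne: "T \<noteq> {}" using cT unfolding conn_R by simp
    obtain t where t: "t \<in> T" and tmax: "\<forall>s\<in>T. card (N s) \<le> card (N t)"
      using finite_max[OF fT Tne, of "\<lambda>s. card (N s)"] by blast
    have tS: "t \<in> S" using t TS by auto
    obtain b where b: "b \<in> S" "b \<noteq> t" "\<not> E t b" using noU t tS by blast
    have "\<exists>a\<in>T. E t a \<and> (\<exists>b'\<in>S. E a b' \<and> b' \<noteq> t \<and> \<not> E t b')"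
    proof (rule ccontr)
      assume H: "\<not> ?thesis"
      have inN: "s \<in> N t" if "(R E T)\<^sup>*\<^sup>* t s" for s
        using that
      proof (induction rule: rtranclp_induct)
        case base then show ?case using tS by (simp add: N_def)
        next
        case (step u s)
        then have us: "E u s" "u \<in> T" "s \<in> T" unfolding R_def by auto
        then have sS: "s \<in> S" using TS by auto
        show ?case
        proof (cases "u = t")
          case True then show ?thesis using us sS by (simp add: N_def)
        next
          case False
          then have "E t u" using step.IH unfolding N_def by auto
          then have "s = t \<or> E t s" using H us sS by blast
          then show ?thesis using sS by (auto simp: N_def)
        qed
      qed
      have "T \<subseteq> N t" using cT t inN unfolding conn_R by blast
      have bN: "b \<notin> N t" using b unfolding N_def by auto
      then have "b \<notin> T" using \<open>T \<subseteq> N t\<close> by blast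
      then obtain s where s: "s \<in> T" "E b s" using dom b by blast
      have "s \<noteq> t" using s b sym by blast
      then have "E t s" using s \<open>T \<subseteq> N t\<close> unfolding N_def by blast
      then show False using H s b sym by blast
    qed
    then obtain a b' where a: "a \<in> T" "E t a" and b': "b' \<in> S" "E a b'" "b' \<noteq> t" "\<not> E t b'"
      by blast
    have aS: "a \<in> S" using a TS by auto
    have sub: "N t \<subseteq> N a"
    proof
      fix c assume c: "c \<in> N t"
      show "c \<in> N a"
      proof (cases "c = t \<or> c = a")
        case True then show ?thesis using c a aS sym unfolding N_def by auto
      next
        case False
        then have cS: "c \<in> S" and ec: "E t c" using c unfolding N_def by auto
        show ?thesis
        proof (rule ccontr)
          assume "c \<notin> N a"
          then have nca: "\<not> E c a" using cS sym unfolding N_def by auto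
          have dist: "distinct [c, t, a, b']" using False b' a irr ec by auto
          have ecb: "\<not> E t b'" using b' by simp
          have p4: "\<And>a b c d. a\<in>S \<Longrightarrow> b\<in>S \<Longrightarrow> c\<in>S \<Longrightarrow> d\<in>S \<Longrightarrow> distinct [a,b,c,d] \<Longrightarrow>
              E a b \<Longrightarrow> E b c \<Longrightarrow> E c d \<Longrightarrow> \<not> E a c \<Longrightarrow> \<not> E b d \<Longrightarrow> \<not> E a d \<Longrightarrow> False"
            using tp unfolding trivially_perfect_def by blast
          have c4: "\<And>a b c d. a\<in>S \<Longrightarrow> b\<in>S \<Longrightarrow> c\<in>S \<Longrightarrow> d\<in>S \<Longrightarrow> distinct [a,b,c,d] \<Longrightarrow>
              E a b \<Longrightarrow> E b c \<Longrightarrow> E c d \<Longrightarrow> E d a \<Longrightarrow> \<not> E a c \<Longrightarrow> \<not> E b d \<Longrightarrow> False"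
            using tp unfolding trivially_perfect_def by blast
          have ect: "E c t" using ec sym by blast
          show False
          proof (cases "E c b'")
            case True
            then have "E b' c" using sym by blast
            then show False using c4[OF cS tS aS b'(1) dist ect a(2) b'(2) _ nca ecb] by blast
          next
            case False
            then show False using p4[OF cS tS aS b'(1) dist ect a(2) b'(2) nca ecb] by blast
          qed
        qed
      qed
    qed
    moreover have "b' \<in> N a - N t" using b' unfolding N_def by auto
    ultimately have "N t \<subset> N a" by blast
    moreover have "finite (N a)" using fin unfolding N_def by auto
    ultimately have "card (N t) < card (N a)" by (rule psubset_card_mono[rotated])
    then show False using tmax a by force
  qed
qed

lemma bcc_from_block:
  assumes fin: "finite V" and bg: "block_graph V E" and BV: "B \<subseteq> V"
    and cb: "connected_on E B" "no_cut_vertex E B"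
  shows "is_clique E B"
proof -
  define F where "F = {B'. B \<subseteq> B' \<and> B' \<subseteq> V \<and> connected_on E B' \<and> no_cut_vertex E B'}"
  have "F \<subseteq> Pow V" unfolding F_def by auto
  then have fF: "finite F" using fin finite_subset by blast
  have BF: "B \<in> F" unfolding F_def using BV cb by auto
  obtain M where M: "M \<in> F" and Mmax: "\<forall>X\<in>F. card X \<le> card M"
    using finite_max[OF fF, of card] BF by blast
  have "is_block V E M"
    unfolding is_block_def
  proof (intro conjI allI impI)
    show "M \<subseteq> V" "connected_on E M" "no_cut_vertex E M" using M unfolding F_def by auto
  next
    fix B' assume h: "M \<subset> B' \<and> B' \<subseteq> V"
    show "\<not> (connected_on E B' \<and> no_cut_vertex E B')"
    proof
      assume c: "connected_on E B' \<and> no_cut_vertex E B'"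
      then have "B' \<in> F" using h M unfolding F_def by auto
      then have "card B' \<le> card M" using Mmax by blast
      moreover have "card M < card B'" using h fin by (meson finite_subset psubset_card_mono)
      ultimately show False by simp
    qed
  qed
  then have "is_clique E M" using bg unfolding block_graph_def by blast
  moreover have "B \<subseteq> M" using M unfolding F_def by auto
  ultimately show ?thesis unfolding is_clique_def by blast
qed

theorem mainTheorem10:
  fixes V :: "'a set" and E :: "'a \<Rightarrow> 'a \<Rightarrow> bool"
  assumes "simple_graph V E"
  shows "(block_graph V E \<longrightarrow> hereditarily_connected_domishold V E) \<and>
         (trivially_perfect V E \<longrightarrow> hereditarily_connected_domishold V E)"
proof -
  have fin: "finite V" and sym: "\<forall>x y. E x y \<longrightarrow> E y x" and irr: "\<forall>x. \<not> E x x"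
    using assms unfolding simple_graph_def by auto
  have A: "hereditarily_connected_domishold V E" if bg: "block_graph V E"
    unfolding hereditarily_connected_domishold_def
  proof (intro allI impI)
    fix S assume SV: "S \<subseteq> V"
    have fS: "finite S" using fin SV finite_subset by blast
    have P: "bcc E S" unfolding bcc_def using bcc_from_block[OF fin bg] SV by blast
    show "connected_domishold S E"
    proof (cases "connected_on E S")
      case conn: True
      have "{v. cutv E S v} \<subseteq> S" unfolding cutv_def by auto
      moreover have "\<forall>T. T \<subseteq> S \<longrightarrow> (connected_dominating_set S E T \<longleftrightarrow> T \<noteq> {} \<and> {v. cutv E S v} \<subseteq> T)"
        using block_cds[OF sym irr conn P] by blast
      ultimately have "\<exists>(w :: 'a \<Rightarrow> real) (t :: real). (\<forall>x\<in>S. w x \<ge> 0) \<and> t \<ge> 0 \<and>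
        (\<forall>T. T \<subseteq> S \<longrightarrow> ((\<Sum>x\<in>T. w x) \<ge> t \<longleftrightarrow> connected_dominating_set S E T))"
        by (rule weights_sub[OF fS])
      then show ?thesis unfolding connected_domishold_def by (rule disjI2)
    qed (simp add: connected_domishold_def)
  qed
  have B: "hereditarily_connected_domishold V E" if tp: "trivially_perfect V E"
    unfolding hereditarily_connected_domishold_def
  proof (intro allI impI)
    fix S assume SV: "S \<subseteq> V"
    have fS: "finite S" using fin SV finite_subset by blast
    have tpS: "trivially_perfect S E" using tp SV unfolding trivially_perfect_def by blast
    have "\<forall>T. T \<subseteq> S \<longrightarrow> (connected_dominating_set S E T \<longleftrightarrow> T \<inter> {u\<in>S. \<forall>x\<in>S. x \<noteq> u \<longrightarrow> E u x} \<noteq> {})"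
      using tp_cds[OF sym irr fS tpS] by blast
    then have "\<exists>(w :: 'a \<Rightarrow> real) (t :: real). (\<forall>x\<in>S. w x \<ge> 0) \<and> t \<ge> 0 \<and>
        (\<forall>T. T \<subseteq> S \<longrightarrow> ((\<Sum>x\<in>T. w x) \<ge> t \<longleftrightarrow> connected_dominating_set S E T))"
      by (rule weights_hit[OF fS])
    then show "connected_domishold S E"
      unfolding connected_domishold_def by (rule disjI2)
  qed
  show ?thesis using A B by blast
qed

end
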